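(* Let $\mathcal{H}=(V,E)$ be a linear hypergraph with $n$ vertices such that for every $e\in E$ there exists $x\in e$ with $\mathrm{deg}_{\mathcal{H}}(x)\le|e|$. Then $\mathrm{q}(\mathcal{H})\le n$.
   Context: A hypergraph $\mathcal{H}=(V,E)$ has a finite vertex set $V$ and a finite set $E$ of nonempty subsets of $V$ (hyperedges); linear means distinct hyperedges share at most one vertex. $\mathrm{deg}_{\mathcal{H}}(x)$ is the number of hyperedges containing $x$. The chromatic index $\mathrm{q}(\mathcal{H})$ is the least number of colors in a coloring of hyperedges where distinct intersecting hyperedges get different colors. *)

theory Defs
  imports Main
begin

definition hypergraph :: "'a set \<Rightarrow> 'a set set \<Rightarrow> bool" where
  "hypergraph V E \<longleftrightarrow> finite V \<and> finite E \<and> (\<forall>e\<in>E. e \<noteq> {} \<and> e \<subseteq> V)"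

definition linear_hypergraph :: "'a set \<Rightarrow> 'a set set \<Rightarrow> bool" where
  "linear_hypergraph V E \<longleftrightarrow> hypergraph V E \<and>
     (\<forall>e\<in>E. \<forall>f\<in>E. e \<noteq> f \<longrightarrow> card (e \<inter> f) \<le> 1)"

definition hdeg :: "'a set set \<Rightarrow> 'a \<Rightarrow> nat" where
  "hdeg E x = card {e\<in>E. x \<in> e}"

definition proper_edge_colouring :: "'a set set \<Rightarrow> nat \<Rightarrow> ('a set \<Rightarrow> nat) \<Rightarrow> bool" where
  "proper_edge_colouring E k c \<longleftrightarrow> (\<forall>e\<in>E. c e < k) \<and>
     (\<forall>e\<in>E. \<forall>f\<in>E. e \<noteq> f \<and> e \<inter> f \<noteq> {} \<longrightarrow> c e \<noteq> c f)"

definition chromatic_index :: "'a set set \<Rightarrow> nat" where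
  "chromatic_index E = (LEAST k. \<exists>c. proper_edge_colouring E k c)"

end

theory Submission
  imports Defs
begin

lemma card_count:
  assumes "finite S"
  shows "card {z\<in>S. P z} = (\<Sum>z\<in>S. if P z then 1 else 0)"
  using assms by (simp add: sum.inter_filter[symmetric])

lemma key:
  assumes lin: "linear_hypergraph V E" and eE: "e \<in> E"
    and minE: "\<forall>f\<in>E. card e \<le> card f" and xe: "x \<in> e"
    and dx: "hdeg E x \<le> card e"
  shows "card {f\<in>E. f \<noteq> e \<and> f \<inter> e \<noteq> {}} + 1 \<le> card V"
proof -
  have finV: "finite V" and finE: "finite E" and sub: "\<forall>f\<in>E. f \<noteq> {} \<and> f \<subseteq> V"
    and lin1: "\<forall>f\<in>E. \<forall>g\<in>E. f \<noteq> g \<longrightarrow> card (f \<inter> g) \<le> 1"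
    using lin unfolding linear_hypergraph_def hypergraph_def by auto
  have finf: "\<And>f. f \<in> E \<Longrightarrow> finite f" 
    using finite_subset sub finV by auto
  define k where "k = card e"
  have eV: "e \<subseteq> V" using sub eE by auto
  have k1: "k \<ge> 1" 
    using finf[OF eE] xe unfolding k_def by (auto simp: Suc_le_eq card_gt_0_iff)
  have kV: "k \<le> card V" unfolding k_def by (rule card_mono[OF finV eV])
  define A where "A = {f\<in>E. x \<in> f} - {e}"
  define B where "B = {f\<in>E. f \<noteq> e \<and> f \<inter> e \<noteq> {} \<and> x \<notin> f}"
  have NAB: "{f\<in>E. f \<noteq> e \<and> f \<inter> e \<noteq> {}} \<subseteq> A \<union> B" using xe unfolding A_def B_def by auto
  have finA: "finite A" and finB: "finite B" using finE unfolding A_def B_def by auto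
  have cN: "card {f\<in>E. f \<noteq> e \<and> f \<inter> e \<noteq> {}} \<le> card A + card B"
    using card_mono[OF finite_UnI[OF finA finB] NAB] card_Un_le[of A B] by linarith
  have cA: "card A \<le> k - 1"
  proof -
    have "card A = hdeg E x - 1" unfolding A_def hdeg_def
      using eE xe finE by (subst card_Diff_singleton) auto
    then show ?thesis using dx k_def by simp
  qed
  have cB: "card B \<le> card V - k"
  proof (cases "k = 1")
    case True
    then have "e = {x}" using xe k_def by (metis card_1_singletonE singletonD)
    then have "B = {}" unfolding B_def by auto
    then show ?thesis by simp
  next
    case False
    then have k2: "k \<ge> 2" using k1 by simp
    have one: "\<exists>y. f \<inter> e = {y} \<and> y \<noteq> x" if "f \<in> B" for f
    proof -
      have fE: "f \<in> E" "f \<noteq> e" "f \<inter> e \<noteq> {}" "x \<notin> f" using that B_def by auto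
      have "card (f \<inter> e) \<le> 1" using lin1 fE eE by blast
      moreover have "card (f \<inter> e) \<noteq> 0" using fE finf by auto
      ultimately have "card (f \<inter> e) = 1" by simp
      then obtain y where "f \<inter> e = {y}" using card_1_singletonE by blast
      then show ?thesis using fE by auto
    qed
    have big: "k - 1 \<le> card (f - e)" if fB: "f \<in> B" for f
    proof -
      have fE: "f \<in> E" using that B_def by auto
      obtain y where y: "f \<inter> e = {y}" using one fB by blast
      have "card (f - e) = card f - card (f \<inter> e)" using finf[OF fE] card_Diff_subset_Int[of f e] by simp
      then have "card (f - e) = card f - 1" using y by simp
      moreover have "card e \<le> card f" using minE fE by blast
      ultimately show ?thesis using k_def by simp
    qed
    have per: "card {f\<in>B. z \<in> f} \<le> k - 1" if "z \<in> V - e" for z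
    proof -
      define g where "g f = the_elem (f \<inter> e)" for f
      have "inj_on g {f\<in>B. z \<in> f}"
      proof (rule inj_onI)
        fix f h assume f: "f \<in> {f\<in>B. z \<in> f}" and h: "h \<in> {f\<in>B. z \<in> f}" and gg: "g f = g h"
        obtain y1 where y1: "f \<inter> e = {y1}" using one f by blast
        obtain y2 where y2: "h \<inter> e = {y2}" using one h by blast
        have "y1 = y2" using gg y1 y2 g_def by simp
        then have "{y1, z} \<subseteq> f \<inter> h" using y1 y2 f h by auto
        moreover have "y1 \<noteq> z" using y1 that by auto
        moreover have "finite (f \<inter> h)" using f finf B_def by auto
        ultimately have "card {y1, z} \<le> card (f \<inter> h)" by (intro card_mono)
        then have "card (f \<inter> h) \<ge> 2" using \<open>y1 \<noteq> z\<close> by simp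
        show "f = h"
        proof (rule ccontr)
          assume "f \<noteq> h"
          moreover have "f \<in> E" "h \<in> E" using f h B_def by auto
          ultimately have "card (f \<inter> h) \<le> 1" using lin1 by blast
          then show False using \<open>card (f \<inter> h) \<ge> 2\<close> by simp
        qed
      qed
      moreover have "g ` {f\<in>B. z \<in> f} \<subseteq> e - {x}"
      proof
        fix w assume "w \<in> g ` {f\<in>B. z \<in> f}"
        then obtain f where f: "f \<in> B" and w: "w = g f" by auto
        obtain y where y: "f \<inter> e = {y}" "y \<noteq> x" using one f by blast
        have "w = y" using w y g_def by simp
        then show "w \<in> e - {x}" using y by auto
      qed
      moreover have "finite (e - {x})" using finf[OF eE] by simp
      ultimately have "card {f\<in>B. z \<in> f} \<le> card (e - {x})"
        by (rule card_inj_on_le)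
      then show ?thesis using xe k_def by simp
    qed
    have "card B * (k - 1) = (\<Sum>f\<in>B. k - 1)" by simp
    also have "\<dots> \<le> (\<Sum>f\<in>B. card (f - e))" using big by (meson sum_mono)
    also have "\<dots> = (\<Sum>f\<in>B. \<Sum>z\<in>V - e. if z \<in> f then 1 else 0)"
    proof (rule sum.cong)
      fix f assume "f \<in> B"
      then have "f - e = {z\<in>V - e. z \<in> f}" using sub B_def by auto
      then show "card (f - e) = (\<Sum>z\<in>V - e. if z \<in> f then 1 else 0)"
        using card_count[of "V - e" "\<lambda>z. z \<in> f"] finV by simp
    qed simp
    also have "\<dots> = (\<Sum>z\<in>V - e. \<Sum>f\<in>B. if z \<in> f then 1 else 0)" by (rule sum.swap)
    also have "\<dots> = (\<Sum>z\<in>V - e. card {f\<in>B. z \<in> f})"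
      using card_count[OF finB] by simp
    also have "\<dots> \<le> (\<Sum>z\<in>V - e. k - 1)" using per by (meson sum_mono)
    also have "\<dots> = (card V - k) * (k - 1)" using card_Diff_subset[OF finite_subset[OF eV finV] eV] k_def by simp
    finally show ?thesis using k2 by simp
  qed
  show ?thesis using cN cA cB kV k1 by linarith
qed

lemma colouring_exists:
  assumes "linear_hypergraph V E"
    and "\<forall>e\<in>E. \<exists>x\<in>e. hdeg E x \<le> card e"
  shows "\<exists>c. proper_edge_colouring E (card V) c"
  using assms
proof (induction "card E" arbitrary: E rule: less_induct)
  case less
  show ?case
  proof (cases "E = {}")
    case True
    then show ?thesis unfolding proper_edge_colouring_def by simp
  next
    case False
    have finE: "finite E" using less.prems unfolding linear_hypergraph_def hypergraph_def by auto
    obtain e where eE: "e \<in> E" and emin: "\<forall>f\<in>E. card e \<le> card f"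
    proof -
      obtain e0 where "e0 \<in> E" using False by blast
      then show ?thesis using ex_has_least_nat[of "\<lambda>e. e \<in> E" e0 card] that by blast
    qed
    define E' where "E' = E - {e}"
    have lt: "card E' < card E" using eE finE E'_def card_gt_0_iff[of E] by auto
    have lin': "linear_hypergraph V E'" using less.prems(1) finE
      unfolding E'_def linear_hypergraph_def hypergraph_def by auto
    have hd: "hdeg E' y \<le> hdeg E y" for y
      unfolding hdeg_def E'_def using finE by (intro card_mono) auto
    have cond': "\<forall>f\<in>E'. \<exists>x\<in>f. hdeg E' x \<le> card f"
      using less.prems(2) hd E'_def by (meson DiffD1 le_trans)
    obtain c where c: "proper_edge_colouring E' (card V) c" using less.hyps[OF lt lin' cond'] by blast
    obtain x where xe: "x \<in> e" and dx: "hdeg E x \<le> card e" using less.prems(2) eE by blast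
    define N where "N = {f\<in>E. f \<noteq> e \<and> f \<inter> e \<noteq> {}}"
    have cN: "card N + 1 \<le> card V" using key[OF less.prems(1) eE emin xe dx] N_def by simp
    have "card (c ` N) < card {0..<card V}" using cN card_image_le[of N c] finE N_def by simp
    then obtain j where j: "j \<in> {0..<card V}" "j \<notin> c ` N"
    proof -
      have "finite (c ` N)" using finE N_def by simp
      then have "\<not> {0..<card V} \<subseteq> c ` N" using card_mono[of "c ` N" "{0..<card V}"] \<open>card (c ` N) < _\<close> by linarith
      then show ?thesis using that by blast
    qed
    define c' where "c' = c(e := j)"
    have "proper_edge_colouring E (card V) c'"
      unfolding proper_edge_colouring_def
    proof (intro conjI ballI impI)
      fix f assume "f \<in> E"
      then show "c' f < card V" using c j unfolding c'_def proper_edge_colouring_def E'_def by auto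
    next
      fix f g assume f: "f \<in> E" and g: "g \<in> E" and fg: "f \<noteq> g \<and> f \<inter> g \<noteq> {}"
      show "c' f \<noteq> c' g"
      proof (cases "f = e")
        case True
        then have "g \<in> N" using g fg N_def by auto
        then show ?thesis using True fg j c'_def by force
      next
        case False
        note fne = False
        show ?thesis
        proof (cases "g = e")
          case True
          then have "f \<in> N" using f fg N_def by auto
          then show ?thesis using True fg j c'_def by force
        next
          case False
          then show ?thesis using fne f g fg c unfolding c'_def proper_edge_colouring_def E'_def by auto
        qed
      qed
    qed
    then show ?thesis by blast
  qed
qed

theorem corollary5p5:
  fixes V :: "'a set" and E :: "'a set set" and n :: nat
  assumes "linear_hypergraph V E"
    and "card V = n"
    and "\<forall>e\<in>E. \<exists>x\<in>e. hdeg E x \<le> card e"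
  shows "chromatic_index E \<le> n"
proof -
  obtain c where "proper_edge_colouring E (card V) c" using colouring_exists assms(1,3) by blast
  then show ?thesis unfolding chromatic_index_def using assms(2) by (metis Least_le)
qed

end
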